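(* Let $\Delta$ be a simplicial complex on $[n]$ with $\dim\Delta\le n-3$, and let $U_{\bar\sigma}$ be a subspace in $L_\Delta$ for some face $\sigma$ of $\Delta$, where $\bar\sigma=[n]-\sigma$. Then the lower interval $[\hat0,U_{\bar\sigma}]$ of $L_\Delta$ is isomorphic to the intersection lattice of the diagonal arrangement $\mathcal{A}_{\mathrm{link}_\Delta\sigma}$ associated to $\mathrm{link}_\Delta\sigma$, regarded as a simplicial complex on the vertex set $\bar\sigma$ (so the arrangement lives in $\mathbb{R}^{\bar\sigma}$).
   Context: For a finite set $V$ and $S\subseteq V$, $U_S=\{u\in\mathbb{R}^V:u_i=u_j\ \forall i,j\in S\}$. For a simplicial complex $\Gamma$ on $V$, $\mathcal{A}_\Gamma=\{U_{V-F}:F\text{ facet of }\Gamma\}$ and its intersection lattice is the set of all intersections of members of $\mathcal{A}_\Gamma$ (including $\mathbb{R}^V$), ordered by reverse inclusion; $L_\Delta$ is this lattice for $\Delta$ on $[n]$. $\mathrm{link}_\Delta\sigma=\{\tau\in\Delta:\tau\cap\sigma=\emptyset,\ \tau\cup\sigma\in\Delta\}$. *)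

theory Defs
  imports Complex_Main
begin

text \<open>Vectors in R^V, for a finite set V of type 'a, are represented as functions
  'a => real vanishing outside V.\<close>
definition RV :: "'a set \<Rightarrow> ('a \<Rightarrow> real) set" where
  "RV V = {u. \<forall>i. i \<notin> V \<longrightarrow> u i = 0}"

definition USub :: "'a set \<Rightarrow> 'a set \<Rightarrow> ('a \<Rightarrow> real) set" where
  "USub V S = {u \<in> RV V. \<forall>i\<in>S. \<forall>j\<in>S. u i = u j}"

definition simplicial_complex :: "'a set \<Rightarrow> 'a set set \<Rightarrow> bool" where
  "simplicial_complex V \<Gamma> \<longleftrightarrow> (\<forall>F\<in>\<Gamma>. F \<subseteq> V) \<and> (\<forall>F\<in>\<Gamma>. \<forall>G. G \<subseteq> F \<longrightarrow> G \<in> \<Gamma>)"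

definition facets :: "'a set set \<Rightarrow> 'a set set" where
  "facets \<Gamma> = {F \<in> \<Gamma>. \<forall>G\<in>\<Gamma>. F \<subseteq> G \<longrightarrow> G = F}"

definition diag_arr :: "'a set \<Rightarrow> 'a set set \<Rightarrow> ('a \<Rightarrow> real) set set" where
  "diag_arr V \<Gamma> = {USub V (V - F) | F. F \<in> facets \<Gamma>}"

text \<open>Intersection lattice: all intersections of subfamilies of A_Gamma (the empty
  intersection being R^V), ordered by reverse inclusion.\<close>
definition int_lattice :: "'a set \<Rightarrow> 'a set set \<Rightarrow> ('a \<Rightarrow> real) set set" where
  "int_lattice V \<Gamma> = {RV V \<inter> \<Inter>\<S> | \<S>. \<S> \<subseteq> diag_arr V \<Gamma>}"

definition link :: "'a set set \<Rightarrow> 'a set \<Rightarrow> 'a set set" where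
  "link \<Delta> \<sigma> = {\<tau> \<in> \<Delta>. \<tau> \<inter> \<sigma> = {} \<and> \<tau> \<union> \<sigma> \<in> \<Delta>}"

definition rev_incl_iso :: "'b set set \<Rightarrow> 'c set set \<Rightarrow> bool" where
  "rev_incl_iso P Q \<longleftrightarrow> (\<exists>f. bij_betw f P Q \<and>
      (\<forall>X\<in>P. \<forall>Y\<in>P. X \<supseteq> Y \<longleftrightarrow> f X \<supseteq> f Y))"

end

theory Submission
  imports Defs
begin

lemma USub_cong:
  assumes "u \<in> RV V" "v \<in> RV V" "\<forall>i\<in>B. u i = v i"
  shows "u \<in> USub V B \<longleftrightarrow> v \<in> USub V B"
  using assms unfolding USub_def by auto

lemma USub_change:
  assumes "u \<in> RV W" "RV W \<subseteq> RV V"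
  shows "u \<in> USub V B \<longleftrightarrow> u \<in> USub W B"
  using assms unfolding USub_def by auto

theorem lemma4p5:
  fixes n :: nat and \<Delta> :: "nat set set" and \<sigma> :: "nat set"
  assumes cx: "simplicial_complex {1..n} \<Delta>"
    and dim: "\<forall>F\<in>\<Delta>. int (card F) - 1 \<le> int n - 3"
    and face: "\<sigma> \<in> \<Delta>"
    and inL: "USub {1..n} ({1..n} - \<sigma>) \<in> int_lattice {1..n} \<Delta>"
  shows "rev_incl_iso
           {X \<in> int_lattice {1..n} \<Delta>. USub {1..n} ({1..n} - \<sigma>) \<subseteq> X}
           (int_lattice ({1..n} - \<sigma>) (link \<Delta> \<sigma>))"
proof -
  define V where "V = {1..n}"
  define W where "W = V - \<sigma>"
  have finV: "finite V" by (simp add: V_def)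
  have cV: "card V = n" by (simp add: V_def)
  have FV: "\<And>F. F \<in> \<Delta> \<Longrightarrow> F \<subseteq> V" using cx by (auto simp: simplicial_complex_def V_def)
  have down: "\<And>F G. F \<in> \<Delta> \<Longrightarrow> G \<subseteq> F \<Longrightarrow> G \<in> \<Delta>" using cx by (auto simp: simplicial_complex_def)
  have sV: "\<sigma> \<subseteq> V" using FV face by blast
  have WV: "W \<subseteq> V" by (auto simp: W_def)
  have card2: "2 \<le> card (V - F)" if F: "F \<in> \<Delta>" for F
  proof -
    have "F \<subseteq> V" using FV F by blast
    hence "card (V - F) = card V - card F" using finV by (meson card_Diff_subset finite_subset)
    moreover have "int (card F) - 1 \<le> int n - 3" using dim F by blast
    ultimately show ?thesis using cV by linarith
  qed
  have key: "\<sigma> \<subseteq> F" if F: "F \<in> \<Delta>" and sub: "USub V W \<subseteq> USub V (V - F)" for F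
  proof (rule ccontr)
    assume "\<not> \<sigma> \<subseteq> F"
    then obtain j where j: "j \<in> \<sigma>" "j \<notin> F" by blast
    have jV: "j \<in> V" using j sV by blast
    have "\<not> (V - F) \<subseteq> {j}"
    proof
      assume "V - F \<subseteq> {j}"
      hence "card (V - F) \<le> card {j}" by (meson card_mono finite.emptyI finite.insertI)
      thus False using card2[OF F] by simp
    qed
    then obtain k where k: "k \<in> V" "k \<notin> F" "k \<noteq> j" by blast
    define u where "u = (\<lambda>i::nat. if i = j then (1::real) else 0)"
    have "u \<in> USub V W" using jV j by (auto simp: USub_def RV_def u_def W_def)
    hence "u \<in> USub V (V - F)" using sub by blast
    hence "u j = u k" using jV j k unfolding USub_def by blast
    thus False using k by (simp add: u_def)
  qed
  have linkfac: "\<tau> \<in> facets (link \<Delta> \<sigma>) \<longleftrightarrow> \<tau> \<inter> \<sigma> = {} \<and> \<tau> \<union> \<sigma> \<in> facets \<Delta>" for \<tau>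
  proof
    assume t: "\<tau> \<in> facets (link \<Delta> \<sigma>)"
    hence tl: "\<tau> \<in> \<Delta>" "\<tau> \<inter> \<sigma> = {}" "\<tau> \<union> \<sigma> \<in> \<Delta>" by (auto simp: facets_def link_def)
    have mx: "G = \<tau> \<union> \<sigma>" if G: "G \<in> \<Delta>" "\<tau> \<union> \<sigma> \<subseteq> G" for G
    proof -
      have "G - \<sigma> \<in> link \<Delta> \<sigma>" using G down[of G "G - \<sigma>"] by (auto simp: link_def Un_absorb2)
      moreover have "\<tau> \<subseteq> G - \<sigma>" using G tl by blast
      ultimately have "G - \<sigma> = \<tau>" using t unfolding facets_def by blast
      thus ?thesis using G by blast
    qed
    have "\<tau> \<union> \<sigma> \<in> facets \<Delta>" unfolding facets_def using tl(3) mx by blast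
    thus "\<tau> \<inter> \<sigma> = {} \<and> \<tau> \<union> \<sigma> \<in> facets \<Delta>" using tl(2) by blast
  next
    assume t: "\<tau> \<inter> \<sigma> = {} \<and> \<tau> \<union> \<sigma> \<in> facets \<Delta>"
    hence tD: "\<tau> \<union> \<sigma> \<in> \<Delta>" by (simp add: facets_def)
    hence tl: "\<tau> \<in> link \<Delta> \<sigma>" using t down[of "\<tau> \<union> \<sigma>" \<tau>] by (auto simp: link_def)
    have mx: "G = \<tau>" if G: "G \<in> link \<Delta> \<sigma>" "\<tau> \<subseteq> G" for G
    proof -
      have "G \<union> \<sigma> \<in> \<Delta>" "\<tau> \<union> \<sigma> \<subseteq> G \<union> \<sigma>" using G by (auto simp: link_def)
      hence "G \<union> \<sigma> = \<tau> \<union> \<sigma>" using t unfolding facets_def by blast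
      moreover have "G \<inter> \<sigma> = {}" using G by (auto simp: link_def)
      ultimately show ?thesis using t by blast
    qed
    show "\<tau> \<in> facets (link \<Delta> \<sigma>)" unfolding facets_def using tl mx by blast
  qed
  have diagW: "diag_arr W (link \<Delta> \<sigma>) = {USub W (V - F) | F. F \<in> facets \<Delta> \<and> \<sigma> \<subseteq> F}"
  proof (rule set_eqI, rule iffI)
    fix Z assume "Z \<in> diag_arr W (link \<Delta> \<sigma>)"
    then obtain \<tau> where t: "\<tau> \<in> facets (link \<Delta> \<sigma>)" "Z = USub W (W - \<tau>)" by (auto simp: diag_arr_def)
    hence "\<tau> \<union> \<sigma> \<in> facets \<Delta>" "W - \<tau> = V - (\<tau> \<union> \<sigma>)" using linkfac by (auto simp: W_def)
    hence "Z = USub W (V - (\<tau> \<union> \<sigma>))" "\<tau> \<union> \<sigma> \<in> facets \<Delta>" "\<sigma> \<subseteq> \<tau> \<union> \<sigma>" using t by auto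
    thus "Z \<in> {USub W (V - F) | F. F \<in> facets \<Delta> \<and> \<sigma> \<subseteq> F}" by blast
  next
    fix Z assume "Z \<in> {USub W (V - F) | F. F \<in> facets \<Delta> \<and> \<sigma> \<subseteq> F}"
    then obtain F where F: "F \<in> facets \<Delta>" "\<sigma> \<subseteq> F" "Z = USub W (V - F)" by blast
    have "(F - \<sigma>) \<inter> \<sigma> = {}" "(F - \<sigma>) \<union> \<sigma> = F" using F by auto
    hence "F - \<sigma> \<in> facets (link \<Delta> \<sigma>)" using linkfac F by simp
    moreover have "W - (F - \<sigma>) = V - F" using F by (auto simp: W_def)
    ultimately have "Z = USub W (W - (F - \<sigma>))" "F - \<sigma> \<in> facets (link \<Delta> \<sigma>)" using F by auto
    thus "Z \<in> diag_arr W (link \<Delta> \<sigma>)" unfolding diag_arr_def by blast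
  qed
  define r where "r u = (\<lambda>i. if i \<in> W then u i else (0::real))" for u :: "nat \<Rightarrow> real"
  have rRV: "r u \<in> RV W" for u by (simp add: RV_def r_def)
  have RVWV: "RV W \<subseteq> RV V" using WV by (auto simp: RV_def)
  have fA: "u \<in> USub V B \<longleftrightarrow> r u \<in> USub V B" if "B \<subseteq> W" "u \<in> RV V" for B u
  proof -
    have "r u \<in> RV V" using rRV RVWV by blast
    moreover have "\<forall>i\<in>B. u i = r u i" using that(1) by (auto simp: r_def)
    ultimately show ?thesis using USub_cong that(2) by blast
  qed
  have fB: "u \<in> USub V B \<longleftrightarrow> u \<in> USub W B" if "u \<in> RV W" for B u
    using that RVWV USub_change by blast
  have rid: "u \<in> RV W \<Longrightarrow> r u = u" for u by (auto simp: RV_def r_def)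
  define good where "good X \<longleftrightarrow> X \<subseteq> RV V \<and> (\<forall>u\<in>RV V. u \<in> X \<longleftrightarrow> r u \<in> X)" for X
  define P where "P = {X \<in> int_lattice V \<Delta>. USub V W \<subseteq> X}"
  define Q where "Q = int_lattice W (link \<Delta> \<sigma>)"
  define f where "f X = X \<inter> RV W" for X :: "(nat \<Rightarrow> real) set"
  have Pform: "\<exists>S. X = RV V \<inter> \<Inter>S \<and> (\<forall>Z\<in>S. \<exists>F. F \<in> facets \<Delta> \<and> \<sigma> \<subseteq> F \<and> Z = USub V (V - F))"
    if X: "X \<in> P" for X
  proof -
    obtain S where S: "X = RV V \<inter> \<Inter>S" "S \<subseteq> diag_arr V \<Delta>" using X by (auto simp: P_def int_lattice_def)
    have "\<exists>F. F \<in> facets \<Delta> \<and> \<sigma> \<subseteq> F \<and> Z = USub V (V - F)" if Z: "Z \<in> S" for Z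
    proof -
      obtain F where F: "F \<in> facets \<Delta>" "Z = USub V (V - F)" using Z S by (auto simp: diag_arr_def)
      have "USub V W \<subseteq> Z" using X Z S by (auto simp: P_def)
      hence "\<sigma> \<subseteq> F" using key F by (auto simp: facets_def)
      thus ?thesis using F by blast
    qed
    thus ?thesis using S by blast
  qed
  have Pgood: "good X" if X: "X \<in> P" for X
  proof -
    obtain S where S: "X = RV V \<inter> \<Inter>S" "\<forall>Z\<in>S. \<exists>F. F \<in> facets \<Delta> \<and> \<sigma> \<subseteq> F \<and> Z = USub V (V - F)"
      using Pform[OF X] by blast
    have "u \<in> X \<longleftrightarrow> r u \<in> X" if u: "u \<in> RV V" for u
    proof -
      have "u \<in> Z \<longleftrightarrow> r u \<in> Z" if Z: "Z \<in> S" for Z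
      proof -
        obtain F where F: "\<sigma> \<subseteq> F" "Z = USub V (V - F)" using S Z by blast
        have "V - F \<subseteq> W" using F by (auto simp: W_def)
        thus ?thesis using fA u F by blast
      qed
      thus ?thesis using S u rRV RVWV by blast
    qed
    thus ?thesis using S unfolding good_def by blast
  qed
  have ord: "Y \<subseteq> X \<longleftrightarrow> f Y \<subseteq> f X" if "good X" "good Y" for X Y
  proof
    assume "f Y \<subseteq> f X"
    show "Y \<subseteq> X"
    proof
      fix u assume u: "u \<in> Y"
      hence uV: "u \<in> RV V" using that unfolding good_def by blast
      hence "r u \<in> Y" using that u unfolding good_def by blast
      hence "r u \<in> X" using \<open>f Y \<subseteq> f X\<close> rRV unfolding f_def by blast
      thus "u \<in> X" using that uV unfolding good_def by blast
    qed
  qed (auto simp: f_def)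
  have img1: "f X \<in> Q" if X: "X \<in> P" for X
  proof -
    obtain S where S: "X = RV V \<inter> \<Inter>S" "\<forall>Z\<in>S. \<exists>F. F \<in> facets \<Delta> \<and> \<sigma> \<subseteq> F \<and> Z = USub V (V - F)"
      using Pform[OF X] by blast
    define S' where "S' = {USub W (V - F) | F. F \<in> facets \<Delta> \<and> \<sigma> \<subseteq> F \<and> USub V (V - F) \<in> S}"
    have "S' \<subseteq> diag_arr W (link \<Delta> \<sigma>)" unfolding diagW S'_def by blast
    moreover have "f X = RV W \<inter> \<Inter>S'"
    proof (rule set_eqI)
      fix u
      show "u \<in> f X \<longleftrightarrow> u \<in> RV W \<inter> \<Inter>S'"
      proof (cases "u \<in> RV W")
        case True
        have "u \<in> \<Inter>S \<longleftrightarrow> u \<in> \<Inter>S'"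
        proof
          assume "u \<in> \<Inter>S" thus "u \<in> \<Inter>S'" unfolding S'_def using fB[OF True] by blast
        next
          assume a: "u \<in> \<Inter>S'"
          show "u \<in> \<Inter>S"
          proof
            fix Z assume Z: "Z \<in> S"
            then obtain F where F: "F \<in> facets \<Delta>" "\<sigma> \<subseteq> F" "Z = USub V (V - F)" using S by blast
            hence "USub W (V - F) \<in> S'" using Z unfolding S'_def by blast
            thus "u \<in> Z" using a F fB[OF True] by blast
          qed
        qed
        thus ?thesis using True RVWV S unfolding f_def by blast
      next
        case False thus ?thesis unfolding f_def by blast
      qed
    qed
    ultimately show ?thesis unfolding Q_def int_lattice_def by blast
  qed
  have img2: "Y \<in> f ` P" if Y: "Y \<in> Q" for Y
  proof -
    obtain S' where S': "Y = RV W \<inter> \<Inter>S'" "S' \<subseteq> diag_arr W (link \<Delta> \<sigma>)"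
      using Y by (auto simp: Q_def int_lattice_def)
    define Bs where "Bs = {V - F | F. F \<in> facets \<Delta> \<and> \<sigma> \<subseteq> F \<and> USub W (V - F) \<in> S'}"
    define X where "X = RV V \<inter> \<Inter>(USub V ` Bs)"
    have BW: "B \<subseteq> W" if "B \<in> Bs" for B using that by (auto simp: Bs_def W_def)
    have "USub V ` Bs \<subseteq> diag_arr V \<Delta>" by (auto simp: Bs_def diag_arr_def)
    hence "X \<in> int_lattice V \<Delta>" unfolding X_def int_lattice_def by blast
    moreover have "USub V W \<subseteq> X"
      unfolding X_def using BW by (auto simp: USub_def; blast)
    ultimately have XP: "X \<in> P" unfolding P_def by blast
    have "f X = Y"
    proof (rule set_eqI)
      fix u
      show "u \<in> f X \<longleftrightarrow> u \<in> Y"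
      proof (cases "u \<in> RV W")
        case True
        have "(\<forall>B\<in>Bs. u \<in> USub V B) \<longleftrightarrow> u \<in> \<Inter>S'"
        proof
          assume a: "\<forall>B\<in>Bs. u \<in> USub V B"
          show "u \<in> \<Inter>S'"
          proof
            fix Z assume Z: "Z \<in> S'"
            then obtain F where F: "F \<in> facets \<Delta>" "\<sigma> \<subseteq> F" "Z = USub W (V - F)"
              using S' diagW by blast
            hence "V - F \<in> Bs" using Z unfolding Bs_def by blast
            thus "u \<in> Z" using a F fB[OF True] by blast
          qed
        next
          assume "u \<in> \<Inter>S'" thus "\<forall>B\<in>Bs. u \<in> USub V B" using fB[OF True] unfolding Bs_def by blast
        qed
        thus ?thesis using True RVWV S' unfolding f_def X_def by blast
      next
        case False thus ?thesis using S' unfolding f_def by blast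
      qed
    qed
    thus ?thesis using XP by blast
  qed
  have "inj_on f P"
  proof (rule inj_onI)
    fix X Y assume "X \<in> P" "Y \<in> P" "f X = f Y"
    thus "X = Y" using ord Pgood by (metis subset_antisym order_refl)
  qed
  hence "bij_betw f P Q" using img1 img2 unfolding bij_betw_def by blast
  moreover have "\<forall>X\<in>P. \<forall>Y\<in>P. X \<supseteq> Y \<longleftrightarrow> f X \<supseteq> f Y" using ord Pgood by blast
  ultimately have "rev_incl_iso P Q" unfolding rev_incl_iso_def by blast
  thus ?thesis unfolding P_def Q_def W_def V_def .
qed

end
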